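(* Let $(\Sigma_+,\Sigma_-,N_1,N_2,N_3)$ be a solution of the Wainwright–Hsu system satisfying the constraint, with $N_1<0$ and $N_2,N_3>0$. Then $\lim_{\tau\to\infty}N_1(\tau)=0$ and $\lim_{\tau\to\infty}N_2(\tau)=\lim_{\tau\to\infty}N_3(\tau)=\infty$.
   Context: Wainwright–Hsu system: for functions $N_1,N_2,N_3,\Sigma_+,\Sigma_-$ of $\tau\in\mathbb{R}$ (prime denotes $d/d\tau$), $N_1'=(q-4\Sigma_+)N_1$, $N_2'=(q+2\Sigma_++2\sqrt3\Sigma_-)N_2$, $N_3'=(q+2\Sigma_+-2\sqrt3\Sigma_-)N_3$, $\Sigma_+'=-(2-q)\Sigma_+-3S_+$, $\Sigma_-'=-(2-q)\Sigma_--3S_-$, where $q=2(\Sigma_+^2+\Sigma_-^2)$, $S_+=\frac12[(N_2-N_3)^2-N_1(2N_1-N_2-N_3)]$, $S_-=\frac{\sqrt3}{2}(N_3-N_2)(N_1-N_2-N_3)$, together with the constraint $\Sigma_+^2+\Sigma_-^2+\frac34[N_1^2+N_2^2+N_3^2-2(N_1N_2+N_2N_3+N_1N_3)]=1$. Solutions with these sign conditions exist for all $\tau\in\mathbb{R}$ and the signs are preserved. *)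

theory Defs
  imports "HOL-Analysis.Analysis"
begin

definition WH_q :: "real \<Rightarrow> real \<Rightarrow> real" where
  "WH_q sp sm = 2 * (sp^2 + sm^2)"

definition WH_Sp :: "real \<Rightarrow> real \<Rightarrow> real \<Rightarrow> real" where
  "WH_Sp n1 n2 n3 = (1/2) * ((n2 - n3)^2 - n1 * (2*n1 - n2 - n3))"

definition WH_Sm :: "real \<Rightarrow> real \<Rightarrow> real \<Rightarrow> real" where
  "WH_Sm n1 n2 n3 = (sqrt 3 / 2) * (n3 - n2) * (n1 - n2 - n3)"

definition WH_solution ::
  "(real \<Rightarrow> real) \<Rightarrow> (real \<Rightarrow> real) \<Rightarrow> (real \<Rightarrow> real) \<Rightarrow> (real \<Rightarrow> real) \<Rightarrow> (real \<Rightarrow> real) \<Rightarrow> bool"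
where
  "WH_solution N1 N2 N3 Sp Sm \<longleftrightarrow>
    (\<forall>t. (N1 has_real_derivative ((WH_q (Sp t) (Sm t) - 4 * Sp t) * N1 t)) (at t)
       \<and> (N2 has_real_derivative ((WH_q (Sp t) (Sm t) + 2 * Sp t + 2 * sqrt 3 * Sm t) * N2 t)) (at t)
       \<and> (N3 has_real_derivative ((WH_q (Sp t) (Sm t) + 2 * Sp t - 2 * sqrt 3 * Sm t) * N3 t)) (at t)
       \<and> (Sp has_real_derivative (- (2 - WH_q (Sp t) (Sm t)) * Sp t - 3 * WH_Sp (N1 t) (N2 t) (N3 t))) (at t)
       \<and> (Sm has_real_derivative (- (2 - WH_q (Sp t) (Sm t)) * Sm t - 3 * WH_Sm (N1 t) (N2 t) (N3 t))) (at t)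
       \<and> (Sp t)^2 + (Sm t)^2 + (3/4) * ((N1 t)^2 + (N2 t)^2 + (N3 t)^2
            - 2 * (N1 t * N2 t + N2 t * N3 t + N1 t * N3 t)) = 1)"

end

theory Submission imports Defs "HOL-Real_Asymp.Real_Asymp" begin
lemma amgm: fixes c t :: real assumes "c \<ge> 0" shows "2 * c * \<bar>t\<bar> \<le> 1/4 + 4 * c^2 * t^2"
proof -
  have "(2*c*\<bar>t\<bar> - 1/2)^2 = 4 * c^2 * t^2 - 2 * c * \<bar>t\<bar> + 1/4"
    by (simp add: power2_eq_square algebra_simps abs_mult_self_eq)
  moreover have "0 \<le> (2*c*\<bar>t\<bar> - 1/2)^2" by simp
  ultimately show ?thesis by linarith
qed

lemma key:
  fixes a b x y z :: real
  assumes x: "x < 0" and y: "y > 0" and z: "z > 0"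
    and con: "a^2 + b^2 + (3/4) * (x^2 + y^2 + z^2 - 2 * (x * y + y * z + x * z)) = 1"
  shows "1/2 \<le> (- (2 - WH_q a b) * a - 3 * WH_Sp x y z)
     - (2 / sqrt 3) * ((((WH_q a b + 2 * a + 2 * sqrt 3 * b) * y - (WH_q a b + 2 * a - 2 * sqrt 3 * b) * z) * (y + z)
          - (y - z) * ((WH_q a b + 2 * a + 2 * sqrt 3 * b) * y + (WH_q a b + 2 * a - 2 * sqrt 3 * b) * z)) / (y + z)^2 * b
        + (y - z) / (y + z) * (- (2 - WH_q a b) * b - 3 * WH_Sm x y z))
     + 2 * ((WH_q a b - 4 * a) + (WH_q a b + 2 * a + 2 * sqrt 3 * b) + (WH_q a b + 2 * a - 2 * sqrt 3 * b))"
proof -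
  define s where "s = sqrt 3"
  have s2: "s^2 = 3" "s * s = 3" unfolding s_def by auto
  have spos: "s > 0" unfolding s_def by auto
  have s1: "s \<ge> 1" unfolding s_def by simp
  define q where "q = 2 * (a^2 + b^2)"
  define n where "n = y + z"
  define d where "d = y - z"
  define u where "u = d / n"
  have npos: "n > 0" using y z n_def by auto
  have dn: "\<bar>d\<bar> \<le> n" using y z unfolding d_def n_def by auto
  have u1: "\<bar>u\<bar> \<le> 1" unfolding u_def using dn npos by (simp add: abs_divide)
  have con2: "x^2 + d^2 - 2 * (x * n) = (4/3) * (1 - a^2 - b^2)"
    using con unfolding d_def n_def power2_eq_square by algebra
  have xn: "- (x * n) \<ge> 0" using x npos by (simp add: mult_le_0_iff)
  have ab1: "a^2 + b^2 \<le> 1"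
  proof -
    have "x^2 + d^2 - 2 * (x * n) \<ge> 0" using xn zero_le_power2[of x] zero_le_power2[of d] by linarith
    then show ?thesis using con2 by argo
  qed
  have q2: "0 \<le> 2 - q" "2 - q \<le> 2" using ab1 unfolding q_def by auto
  have T1: "- (2 - WH_q a b) * a - 3 * WH_Sp x y z = -(2-q) * a + (3/2) * (2 * x^2 - (x * n) - d^2)"
    unfolding WH_q_def WH_Sp_def q_def n_def d_def by (simp add: algebra_simps power2_eq_square)
  have T2: "(2 / sqrt 3) * ((((WH_q a b + 2 * a + 2 * sqrt 3 * b) * y - (WH_q a b + 2 * a - 2 * sqrt 3 * b) * z) * (y + z)
          - (y - z) * ((WH_q a b + 2 * a + 2 * sqrt 3 * b) * y + (WH_q a b + 2 * a - 2 * sqrt 3 * b) * z)) / (y + z)^2 * b)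
      = 16 * b^2 * y * z / n^2"
  proof -
    have "(((WH_q a b + 2 * a + 2 * sqrt 3 * b) * y - (WH_q a b + 2 * a - 2 * sqrt 3 * b) * z) * (y + z)
          - (y - z) * ((WH_q a b + 2 * a + 2 * sqrt 3 * b) * y + (WH_q a b + 2 * a - 2 * sqrt 3 * b) * z))
         = 8 * s * b * y * z" unfolding s_def by (simp add: algebra_simps)
    then show ?thesis using spos s2 unfolding n_def s_def[symmetric]
      by (simp add: field_simps power2_eq_square)
  qed
  have T2b: "16 * b^2 * y * z / n^2 \<le> 4 * b^2"
  proof -
    have e: "n^2 - 4 * y * z = (y - z)^2" unfolding n_def by (simp add: power2_eq_square algebra_simps)
    have "4 * y * z \<le> n^2" using e zero_le_power2[of "y - z"] by linarith
    then have "4 * b^2 * (4 * y * z) \<le> 4 * b^2 * n^2"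
      by (rule mult_left_mono) simp
    then have "16 * b^2 * y * z \<le> 4 * b^2 * n^2" by (simp add: algebra_simps)
    then show ?thesis using npos by (simp add: divide_le_eq)
  qed
  have T3: "(2 / sqrt 3) * ((y - z) / (y + z) * (- (2 - WH_q a b) * b - 3 * WH_Sm x y z))
      = - (2 / s) * (2 - q) * u * b - 3 * d^2 * (n - x) / n"
  proof -
    have hw: "(2 / s) * WH_Sm x y z = (z - y) * (x - y - z)" unfolding WH_Sm_def s_def by simp
    have "(2 / sqrt 3) * ((y - z) / (y + z) * (- (2 - WH_q a b) * b - 3 * WH_Sm x y z))
        = - (2 / s) * (2 - q) * u * b - 3 * u * ((2 / s) * WH_Sm x y z)"
    proof -
      have g: "\<And>c p u b W::real. c * (u * (- p * b - 3 * W)) = - c * p * u * b - 3 * u * (c * W)"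
        by (simp add: algebra_simps)
      show ?thesis unfolding u_def d_def n_def q_def WH_q_def s_def by (rule g)
    qed
    also have "\<dots> = - (2 / s) * (2 - q) * u * b - 3 * u * ((z - y) * (x - y - z))" by (simp only: hw)
    also have "3 * u * ((z - y) * (x - y - z)) = 3 * d^2 * (n - x) / n"
      unfolding u_def d_def n_def using npos n_def by (simp add: field_simps power2_eq_square)
    finally show ?thesis by simp
  qed
  have T3b: "3 * d^2 * (n - x) / n \<ge> 3 * d^2"
    using npos x by (simp add: le_divide_eq mult_left_mono)
  have T4: "2 * ((WH_q a b - 4 * a) + (WH_q a b + 2 * a + 2 * sqrt 3 * b) + (WH_q a b + 2 * a - 2 * sqrt 3 * b)) = 12 * (a^2+b^2)"
    unfolding WH_q_def by simp
  have lin: "\<bar>(2 - q) * (a - (2/s) * u * b)\<bar> \<le> 1/2 + 4 * a^2 + (16/3) * b^2"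
  proof -
    have c: "2/s \<le> 2" using s1 spos by (simp add: divide_le_eq)
    have "\<bar>(2 - q) * (a - (2/s) * u * b)\<bar> \<le> 2 * \<bar>a - (2/s) * u * b\<bar>"
      using q2 by (simp add: abs_mult mult_right_mono)
    also have "\<dots> \<le> 2 * \<bar>a\<bar> + 2 * ((2/s) * \<bar>b\<bar>)"
    proof -
      have "\<bar>(2/s) * u * b\<bar> = (2/s) * (\<bar>u\<bar> * \<bar>b\<bar>)" using spos by (simp add: abs_mult)
      also have "\<dots> \<le> (2/s) * \<bar>b\<bar>"
      proof (rule mult_left_mono)
        show "\<bar>u\<bar> * \<bar>b\<bar> \<le> \<bar>b\<bar>" using u1 by (simp add: mult_left_le_one_le)
        show "0 \<le> 2 / s" using spos by simp
      qed
      finally show ?thesis using abs_triangle_ineq4[of a "2/s*u*b"] by argo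
    qed
    also have "\<dots> \<le> 1/2 + 4 * a^2 + (16/3) * b^2"
    proof -
      have "2 * 1 * \<bar>a\<bar> \<le> 1/4 + 4 * 1^2 * a^2" by (rule amgm) simp
      moreover have "2 * ((2/s) * \<bar>b\<bar>) \<le> 1/4 + 4 * (2/s)^2 * b^2"
        using amgm[of "2/s" b] spos by (simp add: mult.assoc)
      moreover have "(2/s)^2 = 4/3" using s2 by (simp add: power_divide)
      ultimately show ?thesis by simp
    qed
    finally show ?thesis .
  qed
  have quad: "2 * x^2 - (x * n) + d^2 \<ge> (1/2) * (x^2 + d^2 - 2 * (x * n))"
    using xn zero_le_power2[of x] zero_le_power2[of d] by argo
  have split: "-(2-q) * a + (2 / s) * (2 - q) * u * b = - ((2 - q) * (a - (2/s) * u * b))"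
    by (simp add: algebra_simps)
  have distr: "\<And>P Q. (2 / sqrt 3) * (P + Q) = (2 / sqrt 3) * P + (2 / sqrt 3) * Q"
    by (simp add: distrib_left)
  show ?thesis
    unfolding distr T1 T4 T2 T3
    using T2b T3b lin quad con2 split abs_le_iff[of "(2 - q) * (a - (2/s) * u * b)"]
      zero_le_power2[of a] zero_le_power2[of b]
    by argo
qed


lemma bounds:
  fixes a b x y z :: real
  assumes x: "x < 0" and y: "y > 0" and z: "z > 0"
    and con: "a^2 + b^2 + (3/4) * (x^2 + y^2 + z^2 - 2 * (x * y + y * z + x * z)) = 1"
  shows "a^2 + b^2 \<le> 1" "3 * (- x * (y + z)) \<le> 2"
proof -
  have e: "4 * a^2 + 4 * b^2 + 3 * x^2 + 3 * (y - z)^2 + 6 * (- x * (y + z)) = 4"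
    using con unfolding power2_eq_square by algebra
  have p: "- x * (y + z) \<ge> 0" using x y z by (simp add: mult_le_0_iff)
  show "a^2 + b^2 \<le> 1" using e p zero_le_power2[of x] zero_le_power2[of "y - z"] by argo
  show "3 * (- x * (y + z)) \<le> 2" using e p zero_le_power2[of x] zero_le_power2[of "y - z"]
    zero_le_power2[of a] zero_le_power2[of b] by argo
qed

theorem mainTheorem12:
  fixes N1 N2 N3 Sp Sm :: "real \<Rightarrow> real"
  assumes "WH_solution N1 N2 N3 Sp Sm"
    and "\<forall>t. N1 t < 0" and "\<forall>t. N2 t > 0" and "\<forall>t. N3 t > 0"
  shows "(N1 \<longlongrightarrow> 0) at_top \<and> filterlim N2 at_top at_top \<and> filterlim N3 at_top at_top"
proof -
  note sol = assms(1)[unfolded WH_solution_def]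
  have n1: "\<And>t. N1 t < 0" and n2: "\<And>t. N2 t > 0" and n3: "\<And>t. N3 t > 0" using assms by auto
  define W where "W t = Sp t - 2 / sqrt 3 * ((N2 t - N3 t) / (N2 t + N3 t) * Sm t)
     + 2 * (ln (- N1 t) + ln (N2 t) + ln (N3 t))" for t
  define E where "E t = (- (2 - WH_q (Sp t) (Sm t)) * Sp t - 3 * WH_Sp (N1 t) (N2 t) (N3 t))
     - (2 / sqrt 3) * ((((WH_q (Sp t) (Sm t) + 2 * Sp t + 2 * sqrt 3 * Sm t) * N2 t - (WH_q (Sp t) (Sm t) + 2 * Sp t - 2 * sqrt 3 * Sm t) * N3 t) * (N2 t + N3 t)
          - (N2 t - N3 t) * ((WH_q (Sp t) (Sm t) + 2 * Sp t + 2 * sqrt 3 * Sm t) * N2 t + (WH_q (Sp t) (Sm t) + 2 * Sp t - 2 * sqrt 3 * Sm t) * N3 t)) / (N2 t + N3 t)^2 * Sm t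
        + (N2 t - N3 t) / (N2 t + N3 t) * (- (2 - WH_q (Sp t) (Sm t)) * Sm t - 3 * WH_Sm (N1 t) (N2 t) (N3 t)))
     + 2 * ((WH_q (Sp t) (Sm t) - 4 * Sp t) + (WH_q (Sp t) (Sm t) + 2 * Sp t + 2 * sqrt 3 * Sm t) + (WH_q (Sp t) (Sm t) + 2 * Sp t - 2 * sqrt 3 * Sm t))" for t
  have E: "E t \<ge> 1/2" for t unfolding E_def using key[OF n1 n2 n3] sol by blast
  have dW: "(W has_real_derivative E t) (at t)" for t
  proof -
    from sol have D1: "(N1 has_real_derivative ((WH_q (Sp t) (Sm t) - 4 * Sp t) * N1 t)) (at t)"
       and D2: "(N2 has_real_derivative ((WH_q (Sp t) (Sm t) + 2 * Sp t + 2 * sqrt 3 * Sm t) * N2 t)) (at t)"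
       and D3: "(N3 has_real_derivative ((WH_q (Sp t) (Sm t) + 2 * Sp t - 2 * sqrt 3 * Sm t) * N3 t)) (at t)"
       and D4: "(Sp has_real_derivative (- (2 - WH_q (Sp t) (Sm t)) * Sp t - 3 * WH_Sp (N1 t) (N2 t) (N3 t))) (at t)"
       and D5: "(Sm has_real_derivative (- (2 - WH_q (Sp t) (Sm t)) * Sm t - 3 * WH_Sm (N1 t) (N2 t) (N3 t))) (at t)"
      by blast+
    have pos: "N2 t + N3 t \<noteq> 0" using n2[of t] n3[of t] by simp
    define q where "q = WH_q (Sp t) (Sm t)"
    define A2 where "A2 = (WH_q (Sp t) (Sm t) + 2 * Sp t + 2 * sqrt 3 * Sm t)"
    define A3 where "A3 = (WH_q (Sp t) (Sm t) + 2 * Sp t - 2 * sqrt 3 * Sm t)"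
    define u where "u t = (N2 t - N3 t) / (N2 t + N3 t)" for t
    have dl1: "((\<lambda>t. ln (- N1 t)) has_real_derivative (q - 4 * Sp t)) (at t)"
      by (rule DERIV_cong[OF DERIV_chain2[OF DERIV_ln_divide DERIV_minus[OF D1]]])
         (use n1[of t] in \<open>simp_all add: q_def\<close>)
    have dl2: "((\<lambda>t. ln (N2 t)) has_real_derivative A2) (at t)"
      by (rule DERIV_cong[OF DERIV_chain2[OF DERIV_ln_divide D2]])
         (use n2[of t] in \<open>simp_all add: A2_def\<close>)
    have dl3: "((\<lambda>t. ln (N3 t)) has_real_derivative A3) (at t)"
      by (rule DERIV_cong[OF DERIV_chain2[OF DERIV_ln_divide D3]])
         (use n3[of t] in \<open>simp_all add: A3_def\<close>)
    have du: "(u has_real_derivative (((A2 * N2 t - A3 * N3 t) * (N2 t + N3 t)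
          - (N2 t - N3 t) * (A2 * N2 t + A3 * N3 t)) / (N2 t + N3 t)^2)) (at t)"
      unfolding u_def[abs_def]
      by (rule DERIV_cong[OF DERIV_quotient[OF DERIV_diff[OF D2 D3] DERIV_add[OF D2 D3] pos]])
         (simp add: A2_def A3_def power2_eq_square algebra_simps)
    have dp: "((\<lambda>t. u t * Sm t) has_real_derivative
        (((A2 * N2 t - A3 * N3 t) * (N2 t + N3 t)
          - (N2 t - N3 t) * (A2 * N2 t + A3 * N3 t)) / (N2 t + N3 t)^2) * Sm t
        + u t * (- (2 - WH_q (Sp t) (Sm t)) * Sm t - 3 * WH_Sm (N1 t) (N2 t) (N3 t))) (at t)"
      by (rule DERIV_cong[OF DERIV_mult[OF du D5]]) simp
    have dall: "((\<lambda>t. Sp t - 2 / sqrt 3 * (u t * Sm t) + 2 * (ln (- N1 t) + ln (N2 t) + ln (N3 t)))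
        has_real_derivative
        ((- (2 - WH_q (Sp t) (Sm t)) * Sp t - 3 * WH_Sp (N1 t) (N2 t) (N3 t))
         - 2 / sqrt 3 * ((((A2 * N2 t - A3 * N3 t) * (N2 t + N3 t)
          - (N2 t - N3 t) * (A2 * N2 t + A3 * N3 t)) / (N2 t + N3 t)^2) * Sm t
        + u t * (- (2 - WH_q (Sp t) (Sm t)) * Sm t - 3 * WH_Sm (N1 t) (N2 t) (N3 t)))
         + 2 * ((q - 4 * Sp t) + A2 + A3))) (at t)"
      by (intro DERIV_add DERIV_diff DERIV_cmult D4 dp dl1 dl2 dl3)
    show ?thesis unfolding W_def[abs_def] E_def
      using dall unfolding u_def q_def A2_def A3_def by simp
  qed

  have mono: "W 0 + t / 2 \<le> W t" if t: "t \<ge> 0" for t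
  proof -
    have "(\<lambda>t. W t - t / 2) 0 \<le> (\<lambda>t. W t - t / 2) t"
    proof (rule DERIV_nonneg_imp_nondecreasing[OF t])
      fix x
      have "((\<lambda>t. W t - t / 2) has_real_derivative (E x - 1/2)) (at x)"
        by (auto intro!: derivative_eq_intros dW)
      then show "\<exists>y. ((\<lambda>t. W t - t / 2) has_real_derivative y) (at x) \<and> 0 \<le> y"
        using E[of x] by force
    qed
    then show ?thesis by simp
  qed
  have bnd: "Sp t ^ 2 + Sm t ^ 2 \<le> 1" "3 * (- N1 t * (N2 t + N3 t)) \<le> 2" for t
    using bounds[OF n1 n2 n3] sol by blast+
  have Vb: "\<bar>Sp t - 2 / sqrt 3 * ((N2 t - N3 t) / (N2 t + N3 t) * Sm t)\<bar> \<le> 3" for t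
  proof -
    have a1: "\<bar>Sp t\<bar> \<le> 1" 
    proof (rule power2_le_imp_le)
      show "\<bar>Sp t\<bar>^2 \<le> 1^2" using bnd(1)[of t] zero_le_power2[of "Sm t"] power2_abs[of "Sp t"] one_power2[where 'a=real] by argo
    qed simp
    have b1: "\<bar>Sm t\<bar> \<le> 1" 
    proof (rule power2_le_imp_le)
      show "\<bar>Sm t\<bar>^2 \<le> 1^2" using bnd(1)[of t] zero_le_power2[of "Sp t"] power2_abs[of "Sm t"] one_power2[where 'a=real] by argo
    qed simp
    have u1: "\<bar>(N2 t - N3 t) / (N2 t + N3 t)\<bar> \<le> 1" using n2[of t] n3[of t]
      by (simp add: abs_divide divide_le_eq)
    have c: "2 / sqrt 3 \<le> 2" by (simp add: divide_le_eq)
    have X: "\<bar>(N2 t - N3 t) / (N2 t + N3 t) * Sm t\<bar> \<le> 1"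
      unfolding abs_mult by (rule mult_le_one[OF u1 abs_ge_zero b1])
    have "2 / sqrt 3 * \<bar>(N2 t - N3 t) / (N2 t + N3 t) * Sm t\<bar> \<le> 2 * 1"
      by (rule mult_mono[OF c X]) simp_all
    then have "\<bar>2 / sqrt 3 * ((N2 t - N3 t) / (N2 t + N3 t) * Sm t)\<bar> \<le> 2"
      by (simp add: abs_mult)
    then show ?thesis using a1 by argo
  qed
  define c where "c = (W 0 - 3) / 2"
  have Lb: "c + t / 4 \<le> ln (- N1 t * N2 t * N3 t)" if "t \<ge> 0" for t
  proof -
    have "ln (- N1 t * N2 t * N3 t) = ln (- N1 t) + ln (N2 t) + ln (N3 t)"
    proof -
      have p1: "0 < - N1 t" using n1[of t] by simp
      have p12: "0 < - N1 t * N2 t" using mult_pos_pos[OF p1 n2[of t]] .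
      have "ln ((- N1 t * N2 t) * N3 t) = ln (- N1 t * N2 t) + ln (N3 t)"
        by (rule ln_mult_pos[OF p12 n3[of t]])
      moreover have "ln (- N1 t * N2 t) = ln (- N1 t) + ln (N2 t)"
        by (rule ln_mult_pos[OF p1 n2[of t]])
      ultimately show ?thesis by simp
    qed
    then show ?thesis using mono[OF that] Vb[of t] unfolding W_def c_def by argo
  qed
  have low2: "(3/2) * exp (c + t / 4) \<le> N2 t" "(3/2) * exp (c + t / 4) \<le> N3 t" if "t \<ge> 0" for t
  proof -
    have P: "- N1 t * N2 t * N3 t > 0"
      using mult_pos_pos[OF mult_pos_pos[of "- N1 t" "N2 t"] n3[of t]] n1[of t] n2[of t] by simp
    have "exp (c + t / 4) \<le> - N1 t * N2 t * N3 t"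
      using Lb[OF that] P by (metis exp_le_cancel_iff exp_ln)
    moreover have "3 * (- N1 t * N2 t * N3 t) \<le> 2 * N2 t" "3 * (- N1 t * N2 t * N3 t) \<le> 2 * N3 t"
    proof -
      have h: "3 * (- N1 t * N2 t) \<le> 2" "3 * (- N1 t * N3 t) \<le> 2"
        using bnd(2)[of t] n1[of t] n2[of t] n3[of t]
        by (simp_all add: algebra_simps) (smt (verit) mult_neg_pos)+
      have "3 * (- N1 t * N3 t) * N2 t \<le> 2 * N2 t" by (rule mult_right_mono[OF h(2)]) (use n2[of t] in simp)
      then show "3 * (- N1 t * N2 t * N3 t) \<le> 2 * N2 t" by (simp add: algebra_simps)
      have "3 * (- N1 t * N2 t) * N3 t \<le> 2 * N3 t" by (rule mult_right_mono[OF h(1)]) (use n3[of t] in simp)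
      then show "3 * (- N1 t * N2 t * N3 t) \<le> 2 * N3 t" by (simp add: algebra_simps)
    qed
    ultimately show "(3/2) * exp (c + t / 4) \<le> N2 t" "(3/2) * exp (c + t / 4) \<le> N3 t" by argo+
  qed
  have g: "filterlim (\<lambda>t. (3/2) * exp (c + t / 4)) at_top at_top" by real_asymp
  have ev: "eventually (\<lambda>t. t \<ge> (0::real)) at_top" by (rule eventually_ge_at_top)
  have L2: "filterlim N2 at_top at_top"
    by (rule filterlim_at_top_mono[OF g], rule eventually_mono[OF ev], rule low2(1))
  have L3: "filterlim N3 at_top at_top"
    by (rule filterlim_at_top_mono[OF g], rule eventually_mono[OF ev], rule low2(2))
  have L1: "(N1 \<longlongrightarrow> 0) at_top"
  proof (rule Lim_null_comparison)
    show "((\<lambda>t. (2/3) * inverse (N2 t)) \<longlongrightarrow> 0) at_top"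
      by (rule tendsto_mult_right_zero, rule tendsto_inverse_0_at_top, rule L2)
    show "\<forall>\<^sub>F t in at_top. norm (N1 t) \<le> (2/3) * inverse (N2 t)"
    proof (rule always_eventually, rule allI)
      fix t
      have "3 * (- N1 t * N2 t) \<le> 2"
        using bnd(2)[of t] n1[of t] n2[of t] n3[of t]
        by (simp add: algebra_simps) (smt (verit) mult_neg_pos)
      then show "norm (N1 t) \<le> (2/3) * inverse (N2 t)"
        using n1[of t] n2[of t] by (simp add: field_simps)
    qed
  qed
  show ?thesis using L1 L2 L3 by blast
qed

end
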